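(* Let $G$ be a finitely generated group, $p$ a prime, and $x\in G$. Then $RG_p\big(G/\langle\langle x\rangle\rangle\big)\ge RG_p(G)-1$.
   Context: $\langle\langle x\rangle\rangle$ denotes the normal closure of $x$ in $G$. For a group $A$, $d(A)$ is the minimal number of generators and $d_p(A)=d\big(A/[A,A]A^p\big)$. For a finitely generated group $G$, $RG_p(G)=\inf_H\frac{d_p(H)-1}{[G:H]}$, the infimum over normal subgroups $H\trianglelefteq G$ of $p$-power index. *)

theory Defs
  imports "HOL-Algebra.Algebra" "HOL-Analysis.Analysis"
begin

definition fin_gen :: "('a, 'b) monoid_scheme \<Rightarrow> bool" where
  "fin_gen G \<longleftrightarrow> (\<exists>S. finite S \<and> S \<subseteq> carrier G \<and> generate G S = carrier G)"

definition min_gens :: "('a, 'b) monoid_scheme \<Rightarrow> nat" where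
  "min_gens A = (LEAST n. \<exists>S. finite S \<and> card S = n \<and> S \<subseteq> carrier A \<and> generate A S = carrier A)"

definition frattini_p :: "('a, 'b) monoid_scheme \<Rightarrow> nat \<Rightarrow> 'a set" where
  "frattini_p A p = generate A (derived_set A (carrier A) \<union> {a [^]\<^bsub>A\<^esub> p | a. a \<in> carrier A})"

definition d_p :: "nat \<Rightarrow> ('a, 'b) monoid_scheme \<Rightarrow> nat" where
  "d_p p A = min_gens (A Mod frattini_p A p)"

definition normal_closure :: "('a, 'b) monoid_scheme \<Rightarrow> 'a \<Rightarrow> 'a set" where
  "normal_closure G x = generate G {g \<otimes>\<^bsub>G\<^esub> x \<otimes>\<^bsub>G\<^esub> inv\<^bsub>G\<^esub> g | g. g \<in> carrier G}"

definition RG_p :: "nat \<Rightarrow> ('a, 'b) monoid_scheme \<Rightarrow> real" where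
  "RG_p p G = Inf {(real (d_p p (G\<lparr>carrier := H\<rparr>)) - 1) / real (card (rcosets\<^bsub>G\<^esub> H)) | H.
                    H \<lhd> G \<and> (\<exists>k. card (rcosets\<^bsub>G\<^esub> H) = p ^ k)}"

end

theory Submission
  imports Defs
begin

lemma frattini_subgroup:
  assumes "group A"
  shows "subgroup (frattini_p A p) A"
    and "derived_set A (carrier A) \<subseteq> frattini_p A p"
    and "a \<in> carrier A \<Longrightarrow> a [^]\<^bsub>A\<^esub> p \<in> frattini_p A p"
proof -
  interpret A: group A by fact
  have sub: "derived_set A (carrier A) \<union> {a [^]\<^bsub>A\<^esub> p | a. a \<in> carrier A} \<subseteq> carrier A"
    using A.derived_set_in_carrier by auto
  show "subgroup (frattini_p A p) A"
    unfolding frattini_p_def by (rule A.generate_is_subgroup[OF sub])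
  show "derived_set A (carrier A) \<subseteq> frattini_p A p"
  proof (rule subsetI)
    fix y assume "y \<in> derived_set A (carrier A)"
    thus "y \<in> frattini_p A p" unfolding frattini_p_def by (intro generate.incl UnI1)
  qed
  show "a \<in> carrier A \<Longrightarrow> a [^]\<^bsub>A\<^esub> p \<in> frattini_p A p"
    unfolding frattini_p_def by (rule generate.incl) blast
qed

lemma normal_of_derived:
  assumes "group A" "subgroup W A" "derived_set A (carrier A) \<subseteq> W"
  shows "W \<lhd> A"
proof -
  interpret A: group A by fact
  show ?thesis
  proof (subst A.normal_inv_iff, intro conjI ballI)
    show "subgroup W A" by fact
    fix x h assume x: "x \<in> carrier A" and h: "h \<in> W"
    have hc: "h \<in> carrier A" using subgroup.subset[OF assms(2)] h by blast
    have "x \<otimes>\<^bsub>A\<^esub> h \<otimes>\<^bsub>A\<^esub> inv\<^bsub>A\<^esub> x \<otimes>\<^bsub>A\<^esub> inv\<^bsub>A\<^esub> h \<in> derived_set A (carrier A)"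
      apply (rule UN_I[OF x]) apply (rule UN_I[OF hc]) by (rule singletonI)
    hence "x \<otimes>\<^bsub>A\<^esub> h \<otimes>\<^bsub>A\<^esub> inv\<^bsub>A\<^esub> x \<otimes>\<^bsub>A\<^esub> inv\<^bsub>A\<^esub> h \<in> W" using assms(3) by (rule subsetD[rotated])
    hence "(x \<otimes>\<^bsub>A\<^esub> h \<otimes>\<^bsub>A\<^esub> inv\<^bsub>A\<^esub> x \<otimes>\<^bsub>A\<^esub> inv\<^bsub>A\<^esub> h) \<otimes>\<^bsub>A\<^esub> h \<in> W"
      using h by (rule subgroup.m_closed[OF assms(2)])
    moreover have "(x \<otimes>\<^bsub>A\<^esub> h \<otimes>\<^bsub>A\<^esub> inv\<^bsub>A\<^esub> x \<otimes>\<^bsub>A\<^esub> inv\<^bsub>A\<^esub> h) \<otimes>\<^bsub>A\<^esub> h = x \<otimes>\<^bsub>A\<^esub> h \<otimes>\<^bsub>A\<^esub> inv\<^bsub>A\<^esub> x"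
      using x hc by (simp add: A.m_assoc)
    ultimately show "x \<otimes>\<^bsub>A\<^esub> h \<otimes>\<^bsub>A\<^esub> inv\<^bsub>A\<^esub> x \<in> W" by simp
  qed
qed
lemma frattini_normal:
  assumes "group A" shows "frattini_p A p \<lhd> A"
  using normal_of_derived[OF assms frattini_subgroup(1,2)[OF assms]] .



lemma preimage_subgroup:
  assumes gh: "group_hom G H h" and I: "subgroup I H"
  shows "subgroup {x \<in> carrier G. h x \<in> I} G"
proof -
  have hG: "group G" using gh unfolding group_hom_def by auto
  show ?thesis
  proof (rule group.subgroupI[OF hG])
    show "{x \<in> carrier G. h x \<in> I} \<subseteq> carrier G" by auto
    have "\<one>\<^bsub>G\<^esub> \<in> {x \<in> carrier G. h x \<in> I}"
      using group_hom.hom_one[OF gh] subgroup.one_closed[OF I] monoid.one_closed[OF group.is_monoid[OF hG]] by simp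
    thus "{x \<in> carrier G. h x \<in> I} \<noteq> {}" by blast
    fix a assume a: "a \<in> {x \<in> carrier G. h x \<in> I}"
    thus "inv\<^bsub>G\<^esub> a \<in> {x \<in> carrier G. h x \<in> I}"
      using group_hom.hom_inv[OF gh] subgroup.m_inv_closed[OF I] group.inv_closed[OF hG] by auto
  next
    fix a b assume "a \<in> {x \<in> carrier G. h x \<in> I}" "b \<in> {x \<in> carrier G. h x \<in> I}"
    thus "a \<otimes>\<^bsub>G\<^esub> b \<in> {x \<in> carrier G. h x \<in> I}"
      using group_hom.hom_mult[OF gh] subgroup.m_closed[OF I] monoid.m_closed[OF group.is_monoid[OF hG]] by auto
  qed
qed

lemma coset_gh:
  assumes "M \<lhd> A"
  shows "group_hom A (A Mod M) (\<lambda>a. M #>\<^bsub>A\<^esub> a)"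
  unfolding group_hom_def group_hom_axioms_def
  using assms normal.factorgroup_is_group[OF assms] normal.r_coset_hom_Mod[OF assms]
    normal_def by auto

lemma DP_le:
  assumes A: "group A" and fin: "finite Xs" and XA: "Xs \<subseteq> carrier A"
    and allW: "\<And>W. subgroup W A \<Longrightarrow> Xs \<subseteq> W \<Longrightarrow> frattini_p A p \<subseteq> W \<Longrightarrow> W = carrier A"
  shows "d_p p A \<le> card Xs"
proof -
  define M where "M = frattini_p A p"
  have nM: "M \<lhd> A" unfolding M_def by (rule frattini_normal[OF A])
  define f where "f = (\<lambda>a. M #>\<^bsub>A\<^esub> a)"
  have gh: "group_hom A (A Mod M) f" unfolding f_def by (rule coset_gh[OF nM])
  have QG: "group (A Mod M)" by (rule normal.factorgroup_is_group[OF nM])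
  have fXc: "f ` Xs \<subseteq> carrier (A Mod M)" using XA group_hom.hom_closed[OF gh] by auto
  define C where "C = generate (A Mod M) (f ` Xs)"
  have Csub: "subgroup C (A Mod M)" unfolding C_def by (rule group.generate_is_subgroup[OF QG fXc])
  define W where "W = {x \<in> carrier A. f x \<in> C}"
  have "subgroup W A" unfolding W_def by (rule preimage_subgroup[OF gh Csub])
  moreover have "Xs \<subseteq> W" unfolding W_def C_def using XA generate.incl[of _ "f ` Xs" "A Mod M"] by auto
  moreover have "frattini_p A p \<subseteq> W"
  proof
    fix m assume m: "m \<in> frattini_p A p"
    hence mc: "m \<in> carrier A" using nM M_def normal_imp_subgroup subgroup.subset by blast
    have "f m = M" unfolding f_def using group.coset_join2[OF A mc normal_imp_subgroup[OF nM]] m M_def by simp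
    moreover have "M \<in> C" unfolding C_def using generate.one[of "A Mod M" "f ` Xs"] by simp
    ultimately show "m \<in> W" using mc W_def by simp
  qed
  ultimately have WA: "W = carrier A" by (rule allW)
  have "generate (A Mod M) (f ` Xs) = carrier (A Mod M)"
  proof
    show "generate (A Mod M) (f ` Xs) \<subseteq> carrier (A Mod M)"
      using group.generate_in_carrier[OF QG fXc] by blast
    show "carrier (A Mod M) \<subseteq> generate (A Mod M) (f ` Xs)"
    proof
      fix c assume "c \<in> carrier (A Mod M)"
      then obtain a where a: "a \<in> carrier A" "c = f a" unfolding carrier_FactGroup f_def by blast
      thus "c \<in> generate (A Mod M) (f ` Xs)" using WA W_def C_def by auto
    qed
  qed
  hence "min_gens (A Mod M) \<le> card (f ` Xs)"
    unfolding min_gens_def using fin fXc by (intro Least_le) blast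
  also have "\<dots> \<le> card Xs" using fin by (rule card_image_le)
  finally show ?thesis unfolding d_p_def M_def .
qed

lemma DP_ex:
  assumes A: "group A" and Y: "finite Y" "Y \<subseteq> carrier A" "generate A Y = carrier A"
  shows "\<exists>Xs. finite Xs \<and> Xs \<subseteq> carrier A \<and> card Xs \<le> d_p p A \<and>
     (\<forall>W. subgroup W A \<longrightarrow> Xs \<subseteq> W \<longrightarrow> frattini_p A p \<subseteq> W \<longrightarrow> W = carrier A)"
proof -
  define M where "M = frattini_p A p"
  have nM: "M \<lhd> A" unfolding M_def by (rule frattini_normal[OF A])
  define f where "f = (\<lambda>a. M #>\<^bsub>A\<^esub> a)"
  have gh: "group_hom A (A Mod M) f" unfolding f_def by (rule coset_gh[OF nM])
  have QG: "group (A Mod M)" by (rule normal.factorgroup_is_group[OF nM])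
  have carQ: "carrier (A Mod M) = f ` carrier A" unfolding carrier_FactGroup f_def by simp
  have "generate (A Mod M) (f ` Y) = f ` generate A Y" by (rule group_hom.generate_img[OF gh Y(2)])
  hence genY: "generate (A Mod M) (f ` Y) = carrier (A Mod M)" using Y(3) carQ by simp
  have fYc: "f ` Y \<subseteq> carrier (A Mod M)" using Y(2) group_hom.hom_closed[OF gh] by auto
  let ?P = "\<lambda>n. \<exists>S. finite S \<and> card S = n \<and> S \<subseteq> carrier (A Mod M) \<and> generate (A Mod M) S = carrier (A Mod M)"
  have "?P (card (f ` Y))" using genY fYc Y(1) by blast
  hence "?P (Least ?P)" by (rule LeastI)
  then obtain S where S: "finite S" "card S = d_p p A" "S \<subseteq> carrier (A Mod M)"
      "generate (A Mod M) S = carrier (A Mod M)"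
    unfolding d_p_def min_gens_def M_def by blast
  define r where "r = (\<lambda>s. SOME a. a \<in> carrier A \<and> s = f a)"
  have r: "r s \<in> carrier A \<and> s = f (r s)" if "s \<in> S" for s
  proof -
    have "\<exists>a. a \<in> carrier A \<and> s = f a" using that S(3) carQ by blast
    thus ?thesis unfolding r_def by (rule someI_ex)
  qed
  define Xs where "Xs = r ` S"
  have Xfin: "finite Xs" unfolding Xs_def using S(1) by simp
  have XA: "Xs \<subseteq> carrier A" unfolding Xs_def using r by auto
  have Xc: "card Xs \<le> d_p p A" unfolding Xs_def using card_image_le[OF S(1), of r] S(2) by simp
  have fX: "f ` Xs = S" unfolding Xs_def image_image using r by (auto simp: image_iff)
  have "W = carrier A" if W: "subgroup W A" "Xs \<subseteq> W" "frattini_p A p \<subseteq> W" for W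
  proof
    show "W \<subseteq> carrier A" using W(1) subgroup.subset by blast
    show "carrier A \<subseteq> W"
    proof
      fix a assume a: "a \<in> carrier A"
      have sfW: "subgroup (f ` W) (A Mod M)" by (rule group_hom.subgroup_img_is_subgroup[OF gh W(1)])
      have "S \<subseteq> f ` W" using W(2) fX by blast
      hence "generate (A Mod M) S \<subseteq> f ` W" by (rule group.generate_subgroup_incl[OF QG _ sfW])
      hence "f a \<in> f ` W" using S(4) carQ a by blast
      then obtain w where w: "w \<in> W" "f a = f w" by blast
      have wc: "w \<in> carrier A" using w(1) W(1) subgroup.subset by blast
      have "a \<in> M #>\<^bsub>A\<^esub> w"
        using group.repr_independenceD[OF A normal_imp_subgroup[OF nM] a] w(2) unfolding f_def by simp
      then obtain m where m: "m \<in> M" "a = m \<otimes>\<^bsub>A\<^esub> w" unfolding r_coset_def by blast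
      have "m \<in> W" using m(1) W(3) M_def by blast
      thus "a \<in> W" using m(2) w(1) subgroup.m_closed[OF W(1)] by simp
    qed
  qed
  thus ?thesis using Xfin XA Xc by blast
qed

lemma frattini_img:
  assumes gh: "group_hom A B f" and sur: "f ` carrier A = carrier B"
  shows "frattini_p B p \<subseteq> f ` frattini_p A p"
proof -
  have A: "group A" and B: "group B" using gh unfolding group_hom_def by auto
  let ?SA = "derived_set A (carrier A) \<union> {a [^]\<^bsub>A\<^esub> p | a. a \<in> carrier A}"
  let ?SB = "derived_set B (carrier B) \<union> {a [^]\<^bsub>B\<^esub> p | a. a \<in> carrier B}"
  have SA: "?SA \<subseteq> carrier A" using group.derived_set_in_carrier[OF A] monoid.nat_pow_closed[OF group.is_monoid[OF A]] by auto
  have "?SB \<subseteq> f ` ?SA"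
  proof
    fix y assume "y \<in> ?SB"
    then consider (d) b1 b2 where "b1 \<in> carrier B" "b2 \<in> carrier B"
        "y = b1 \<otimes>\<^bsub>B\<^esub> b2 \<otimes>\<^bsub>B\<^esub> inv\<^bsub>B\<^esub> b1 \<otimes>\<^bsub>B\<^esub> inv\<^bsub>B\<^esub> b2"
      | (p) b where "b \<in> carrier B" "y = b [^]\<^bsub>B\<^esub> p" by auto
    thus "y \<in> f ` ?SA"
    proof cases
      case d
      obtain a1 where a1: "a1 \<in> carrier A" "b1 = f a1" using d(1) sur by blast
      obtain a2 where a2: "a2 \<in> carrier A" "b2 = f a2" using d(2) sur by blast
      have "y = f (a1 \<otimes>\<^bsub>A\<^esub> a2 \<otimes>\<^bsub>A\<^esub> inv\<^bsub>A\<^esub> a1 \<otimes>\<^bsub>A\<^esub> inv\<^bsub>A\<^esub> a2)"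
        using d(3) a1 a2 by (simp add: group_hom.hom_mult[OF gh] group_hom.hom_inv[OF gh] group.inv_closed[OF A] monoid.m_closed[OF group.is_monoid[OF A]])
      moreover have "a1 \<otimes>\<^bsub>A\<^esub> a2 \<otimes>\<^bsub>A\<^esub> inv\<^bsub>A\<^esub> a1 \<otimes>\<^bsub>A\<^esub> inv\<^bsub>A\<^esub> a2 \<in> derived_set A (carrier A)"
        apply (rule UN_I[OF a1(1)]) apply (rule UN_I[OF a2(1)]) by (rule singletonI)
      ultimately show ?thesis by blast
    next
      case p
      obtain a where a: "a \<in> carrier A" "b = f a" using p(1) sur by blast
      have "y = f (a [^]\<^bsub>A\<^esub> p)" using p(2) a group_hom.hom_nat_pow[OF gh] by simp
      thus ?thesis using a(1) by blast
    qed
  qed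
  hence "generate B ?SB \<subseteq> generate B (f ` ?SA)" by (rule group.mono_generate[OF B])
  also have "\<dots> = f ` generate A ?SA" by (rule group_hom.generate_img[OF gh SA])
  finally show ?thesis unfolding frattini_p_def .
qed

lemma (in group) schreier:
  assumes S: "finite S" "S \<subseteq> carrier G" "generate G S = carrier G"
    and K: "subgroup K G" and fin: "finite (rcosets K)"
  shows "\<exists>Y. finite Y \<and> Y \<subseteq> K \<and> generate G Y = K"
proof -
  have Kc: "K \<subseteq> carrier G" using K subgroup.subset by blast
  define rep where "rep c = (SOME t. t \<in> c)" for c :: "'a set"
  define r where "r g = rep (K #> g)" for g
  have r_in: "r g \<in> K #> g" if "g \<in> carrier G" for g
  proof -
    have "g \<in> K #> g" using rcos_self[OF that K] .
    thus ?thesis unfolding r_def rep_def by (rule someI)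
  qed
  have r_c: "r g \<in> carrier G" if "g \<in> carrier G" for g
    using r_in[OF that] r_coset_subset_G[OF Kc that] by blast
  have r_eq: "K #> r g = K #> g" if "g \<in> carrier G" for g
    using repr_independence[OF r_in[OF that] that K] by simp
  define T where "T = r ` carrier G"
  have Tc: "T \<subseteq> carrier G" unfolding T_def using r_c by blast
  have "T \<subseteq> rep ` (rcosets K)" unfolding T_def r_def using rcosetsI[OF Kc] by blast
  hence Tfin: "finite T" by (rule finite_subset[OF _ finite_imageI[OF fin]])
  have rT: "r t = t" if tT: "t \<in> T" for t
  proof -
    obtain g where g': "t = r g" "g \<in> carrier G" using tT unfolding T_def by (rule imageE)
    note g = g'(2,1)
    have "r (r g) = rep (K #> r g)" by (simp only: r_def)
    also have "\<dots> = rep (K #> g)" by (simp only: r_eq[OF g(1)])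
    also have "\<dots> = r g" by (simp only: r_def)
    finally have "r (r g) = r g" .
    thus ?thesis by (simp only: g(2))
  qed
  define Y where "Y = {t \<otimes> s \<otimes> inv (r (t \<otimes> s)) | t s. t \<in> T \<and> s \<in> S} \<union> (T \<inter> K)"
  have "finite {t \<otimes> s \<otimes> inv (r (t \<otimes> s)) | t s. t \<in> T \<and> s \<in> S}"
    using finite_image_set2[of "\<lambda>t. t \<in> T" "\<lambda>s. s \<in> S" "\<lambda>t s. t \<otimes> s \<otimes> inv (r (t \<otimes> s))"] Tfin S(1) by simp
  hence Yfin: "finite Y" unfolding Y_def using Tfin by simp
  have YK: "Y \<subseteq> K"
  proof
    fix y assume "y \<in> Y"
    then consider "y \<in> T \<inter> K" | t s where "t \<in> T" "s \<in> S" "y = t \<otimes> s \<otimes> inv (r (t \<otimes> s))"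
      unfolding Y_def by blast
    thus "y \<in> K"
    proof cases
      case 1 thus ?thesis by blast
    next
      case 2
      have ts: "t \<otimes> s \<in> carrier G" using 2 Tc S(2) by blast
      have "r (t \<otimes> s) \<otimes> inv (t \<otimes> s) \<in> K"
        using subgroup.rcos_module_imp[OF K is_group ts r_in[OF ts]] .
      hence "inv (r (t \<otimes> s) \<otimes> inv (t \<otimes> s)) \<in> K" using subgroup.m_inv_closed[OF K] by blast
      moreover have "inv (r (t \<otimes> s) \<otimes> inv (t \<otimes> s)) = t \<otimes> s \<otimes> inv (r (t \<otimes> s))"
        using ts r_c[OF ts] by (simp add: inv_mult_group)
      ultimately show ?thesis using 2 by simp
    qed
  qed
  have Yc: "Y \<subseteq> carrier G" using YK Kc by blast
  define L where "L = generate G Y"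
  have LK: "L \<subseteq> K" unfolding L_def by (rule generate_subgroup_incl[OF YK K])
  have Lsub: "subgroup L G" unfolding L_def by (rule generate_is_subgroup[OF Yc])
  have Lc: "L \<subseteq> carrier G" using LK Kc by blast
  have claim: "\<exists>l'\<in>L. \<exists>t'\<in>T. l \<otimes> t \<otimes> g = l' \<otimes> t'"
    if "g \<in> generate G S" "l \<in> L" "t \<in> T" for g l t
    using that
  proof (induction g arbitrary: l t rule: generate.induct)
    case one
    have "l \<otimes> t \<otimes> \<one> = l \<otimes> t" using one Lc Tc by (simp add: subsetD)
    thus ?case using one by blast
  next
    case (incl s)
    have s: "s \<in> carrier G" using incl S(2) by blast
    have l: "l \<in> carrier G" and t: "t \<in> carrier G" using incl Lc Tc by auto
    have ts: "t \<otimes> s \<in> carrier G" using s t by simp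
    let ?y = "t \<otimes> s \<otimes> inv (r (t \<otimes> s))"
    have "?y \<in> Y" unfolding Y_def using incl by blast
    hence "?y \<in> L" unfolding L_def by (rule generate.incl)
    hence "l \<otimes> ?y \<in> L" using incl(2) subgroup.m_closed[OF Lsub] by blast
    moreover have "r (t \<otimes> s) \<in> T" unfolding T_def using ts by blast
    moreover have "l \<otimes> t \<otimes> s = (l \<otimes> ?y) \<otimes> r (t \<otimes> s)"
      using l t s r_c[OF ts] by (simp add: m_assoc)
    ultimately show ?case by blast
  next
    case (inv s)
    have s: "s \<in> carrier G" using inv S(2) by blast
    have l: "l \<in> carrier G" and t: "t \<in> carrier G" using inv Lc Tc by auto
    have tis: "t \<otimes> inv s \<in> carrier G" using s t by simp
    define t' where "t' = r (t \<otimes> inv s)"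
    have t'T: "t' \<in> T" unfolding T_def t'_def using tis by blast
    have t'c: "t' \<in> carrier G" using t'T Tc by blast
    have "K #> (t' \<otimes> s) = (K #> t') #> s" using coset_mult_assoc[OF Kc t'c s] by simp
    also have "\<dots> = (K #> (t \<otimes> inv s)) #> s" unfolding t'_def using r_eq[OF tis] by simp
    also have "\<dots> = K #> t" using coset_mult_assoc[OF Kc tis s] t s by (simp add: m_assoc)
    finally have "r (t' \<otimes> s) = r t" unfolding r_def by simp
    hence rt's: "r (t' \<otimes> s) = t" using rT[OF inv(3)] by simp
    let ?y = "t' \<otimes> s \<otimes> inv (r (t' \<otimes> s))"
    have "?y \<in> Y" unfolding Y_def using inv t'T by blast
    hence "?y \<in> L" unfolding L_def by (rule generate.incl)
    hence "inv ?y \<in> L" using subgroup.m_inv_closed[OF Lsub] by blast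
    hence "l \<otimes> inv ?y \<in> L" using inv(2) subgroup.m_closed[OF Lsub] by blast
    moreover have "l \<otimes> t \<otimes> inv s = (l \<otimes> inv ?y) \<otimes> t'"
      using l t s t'c unfolding rt's by (simp add: m_assoc inv_mult_group)
    ultimately show ?case using t'T by blast
  next
    case (eng a b)
    obtain l1 t1 where 1: "l1 \<in> L" "t1 \<in> T" "l \<otimes> t \<otimes> a = l1 \<otimes> t1" using eng.IH(1) eng.prems by blast
    obtain l2 t2 where 2: "l2 \<in> L" "t2 \<in> T" "l1 \<otimes> t1 \<otimes> b = l2 \<otimes> t2" using eng.IH(2) 1 by blast
    have ac: "a \<in> carrier G" "b \<in> carrier G" using eng.hyps generate_in_carrier[OF S(2)] by auto
    have "l \<otimes> t \<otimes> (a \<otimes> b) = (l \<otimes> t \<otimes> a) \<otimes> b"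
      using ac eng.prems Lc Tc by (simp add: m_assoc subsetD)
    thus ?case using 1 2 by auto
  qed
  have "K \<subseteq> L"
  proof
    fix k assume k: "k \<in> K"
    have kc: "k \<in> carrier G" using k Kc by blast
    define t0 where "t0 = r \<one>"
    have t0T: "t0 \<in> T" unfolding t0_def T_def by blast
    have "t0 \<in> K #> \<one>" unfolding t0_def using r_in by simp
    hence t0K: "t0 \<in> K" using Kc by simp
    hence "t0 \<in> L" unfolding L_def using t0T Y_def by (intro generate.incl) blast
    hence it0: "inv t0 \<in> L" using subgroup.m_inv_closed[OF Lsub] by blast
    have t0c: "t0 \<in> carrier G" using t0K Kc by blast
    obtain l' t' where lt: "l' \<in> L" "t' \<in> T" "inv t0 \<otimes> t0 \<otimes> k = l' \<otimes> t'"
      using claim[of k "inv t0" t0] S(3) kc it0 t0T by blast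
    have l'c: "l' \<in> carrier G" and t'c: "t' \<in> carrier G" using lt Lc Tc by auto
    have k_eq: "k = l' \<otimes> t'" using lt(3) t0c kc by simp
    hence "t' = inv l' \<otimes> k" using l'c t'c by (simp add: m_assoc[symmetric])
    moreover have "inv l' \<in> K" using lt(1) LK subgroup.m_inv_closed[OF K] by blast
    ultimately have "t' \<in> K" using k subgroup.m_closed[OF K] by simp
    hence "t' \<in> L" unfolding L_def using lt(2) Y_def by (intro generate.incl) blast
    thus "k \<in> L" using k_eq lt(1) subgroup.m_closed[OF Lsub] by simp
  qed
  thus ?thesis using LK Yfin YK L_def by blast
qed

lemma (in group) normal_closure_normal:
  assumes x: "x \<in> carrier G"
  shows "normal_closure G x \<lhd> G"
  unfolding normal_closure_def
proof (rule normal_generateI)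
  show "{g \<otimes> x \<otimes> inv g |g. g \<in> carrier G} \<subseteq> carrier G" using x by auto
  fix h g assume h: "h \<in> {g \<otimes> x \<otimes> inv g |g. g \<in> carrier G}" and g: "g \<in> carrier G"
  then obtain a where a: "a \<in> carrier G" "h = a \<otimes> x \<otimes> inv a" by blast
  have "g \<otimes> h \<otimes> inv g = (g \<otimes> a) \<otimes> x \<otimes> inv (g \<otimes> a)"
    using a g x by (simp add: m_assoc inv_mult_group)
  moreover have "g \<otimes> a \<in> carrier G" using a g by simp
  ultimately show "g \<otimes> h \<otimes> inv g \<in> {g \<otimes> x \<otimes> inv g |g. g \<in> carrier G}" by blast
qed

lemma (in group) key:
  assumes fg: "fin_gen G" and x: "x \<in> carrier G" and Ndef: "N = normal_closure G x"
    and K: "K \<lhd> G Mod N" and n: "card (rcosets\<^bsub>G Mod N\<^esub> K) = p ^ k" and p: "p > 0"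
  shows "\<exists>H. H \<lhd> G \<and> card (rcosets H) = card (rcosets\<^bsub>G Mod N\<^esub> K) \<and>
     d_p p (G\<lparr>carrier := H\<rparr>) \<le> d_p p ((G Mod N)\<lparr>carrier := K\<rparr>) + card (rcosets\<^bsub>G Mod N\<^esub> K)"
proof -
  define Q where "Q = G Mod N"
  have KQ: "K \<lhd> Q" using K Q_def by simp
  have Ksub: "subgroup K Q" using KQ normal_imp_subgroup by blast
  have nN: "N \<lhd> G" unfolding Ndef by (rule normal_closure_normal[OF x])
  have Nsub: "subgroup N G" using nN normal_imp_subgroup by blast
  have Nc: "N \<subseteq> carrier G" using Nsub subgroup.subset by blast
  define \<pi> where "\<pi> = (\<lambda>g. N #> g)"
  have ghQ: "group_hom G Q \<pi>" unfolding \<pi>_def Q_def by (rule coset_gh[OF nN])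
  have QG: "group Q" unfolding Q_def by (rule normal.factorgroup_is_group[OF nN])
  have carQ: "carrier Q = \<pi> ` carrier G" unfolding Q_def \<pi>_def carrier_FactGroup by simp
  have Kc: "K \<subseteq> carrier Q" using Ksub subgroup.subset by blast
  define H where "H = {g \<in> carrier G. \<pi> g \<in> K}"
  have Hsub: "subgroup H G" unfolding H_def by (rule preimage_subgroup[OF ghQ Ksub])
  have Hc: "H \<subseteq> carrier G" unfolding H_def by blast
  have nH: "H \<lhd> G"
  proof (subst normal_inv_iff, intro conjI ballI)
    show "subgroup H G" by fact
    fix g h assume g: "g \<in> carrier G" and h: "h \<in> H"
    have hc: "h \<in> carrier G" and hK: "\<pi> h \<in> K" using h H_def by auto
    have "\<pi> (g \<otimes> h \<otimes> inv g) = \<pi> g \<otimes>\<^bsub>Q\<^esub> \<pi> h \<otimes>\<^bsub>Q\<^esub> inv\<^bsub>Q\<^esub> \<pi> g"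
      using g hc group_hom.hom_mult[OF ghQ] group_hom.hom_inv[OF ghQ] by simp
    also have "\<dots> \<in> K"
      using normal.inv_op_closed2[OF KQ _ hK] group_hom.hom_closed[OF ghQ g] by blast
    finally show "g \<otimes> h \<otimes> inv g \<in> H" unfolding H_def using g hc by simp
  qed
  have piN: "\<pi> m = \<one>\<^bsub>Q\<^esub>" if "m \<in> N" for m
    unfolding \<pi>_def Q_def using coset_join2[OF _ Nsub that] that Nc by auto
  have NH: "N \<subseteq> H"
  proof
    fix m assume m: "m \<in> N"
    thus "m \<in> H" unfolding H_def using piN[OF m] subgroup.one_closed[OF Ksub] Nc by auto
  qed
  have piH: "\<pi> ` H = K"
  proof
    show "\<pi> ` H \<subseteq> K" unfolding H_def by blast
    show "K \<subseteq> \<pi> ` H"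
    proof
      fix q assume q: "q \<in> K"
      then obtain g where "g \<in> carrier G" "q = \<pi> g" using Kc carQ by blast
      thus "q \<in> \<pi> ` H" unfolding H_def using q by blast
    qed
  qed
  define \<psi> where "\<psi> c = {g \<in> carrier G. \<pi> g \<in> c}" for c
  have psi_eq: "\<psi> (K #>\<^bsub>Q\<^esub> \<pi> g) = H #> g" if g: "g \<in> carrier G" for g
  proof
    have pg: "\<pi> g \<in> carrier Q" using group_hom.hom_closed[OF ghQ g] .
    show "\<psi> (K #>\<^bsub>Q\<^esub> \<pi> g) \<subseteq> H #> g"
    proof
      fix y assume "y \<in> \<psi> (K #>\<^bsub>Q\<^esub> \<pi> g)"
      hence y: "y \<in> carrier G" "\<pi> y \<in> K #>\<^bsub>Q\<^esub> \<pi> g" unfolding \<psi>_def by auto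
      have "\<pi> y \<otimes>\<^bsub>Q\<^esub> inv\<^bsub>Q\<^esub> \<pi> g \<in> K"
        using subgroup.rcos_module_imp[OF Ksub QG pg y(2)] .
      moreover have "\<pi> y \<otimes>\<^bsub>Q\<^esub> inv\<^bsub>Q\<^esub> \<pi> g = \<pi> (y \<otimes> inv g)"
        using y g group_hom.hom_mult[OF ghQ] group_hom.hom_inv[OF ghQ] by simp
      ultimately have "y \<otimes> inv g \<in> H" unfolding H_def using y g by simp
      thus "y \<in> H #> g" using subgroup.rcos_module_rev[OF Hsub is_group g y(1)] by simp
    qed
    show "H #> g \<subseteq> \<psi> (K #>\<^bsub>Q\<^esub> \<pi> g)"
    proof
      fix y assume yH: "y \<in> H #> g"
      have y: "y \<in> carrier G" using r_coset_subset_G[OF Hc g] yH by blast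
      have "y \<otimes> inv g \<in> H" using subgroup.rcos_module_imp[OF Hsub is_group g yH] .
      hence "\<pi> (y \<otimes> inv g) \<in> K" unfolding H_def by simp
      moreover have "\<pi> y \<otimes>\<^bsub>Q\<^esub> inv\<^bsub>Q\<^esub> \<pi> g = \<pi> (y \<otimes> inv g)"
        using y g group_hom.hom_mult[OF ghQ] group_hom.hom_inv[OF ghQ] by simp
      ultimately have "\<pi> y \<otimes>\<^bsub>Q\<^esub> inv\<^bsub>Q\<^esub> \<pi> g \<in> K" by simp
      hence "\<pi> y \<in> K #>\<^bsub>Q\<^esub> \<pi> g"
        using subgroup.rcos_module_rev[OF Ksub QG pg group_hom.hom_closed[OF ghQ y]] by simp
      thus "y \<in> \<psi> (K #>\<^bsub>Q\<^esub> \<pi> g)" unfolding \<psi>_def using y by simp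
    qed
  qed
  have rcQ0: "rcosets\<^bsub>Q\<^esub> K = (\<lambda>a. K #>\<^bsub>Q\<^esub> a) ` carrier Q"
    unfolding RCOSETS_def by (simp add: UNION_singleton_eq_range)
  have rcQ: "rcosets\<^bsub>Q\<^esub> K = (\<lambda>g. K #>\<^bsub>Q\<^esub> \<pi> g) ` carrier G"
    unfolding rcQ0 carQ image_image ..
  have rcG: "rcosets H = (\<lambda>g. H #> g) ` carrier G"
    unfolding RCOSETS_def by (simp add: UNION_singleton_eq_range)
  have psi_img: "\<psi> ` (rcosets\<^bsub>Q\<^esub> K) = rcosets H"
    unfolding rcQ rcG image_image using psi_eq by simp
  have psi_inj: "inj_on \<psi> (rcosets\<^bsub>Q\<^esub> K)"
  proof (rule inj_onI)
    fix c1 c2 assume c1: "c1 \<in> rcosets\<^bsub>Q\<^esub> K" and c2: "c2 \<in> rcosets\<^bsub>Q\<^esub> K" and e: "\<psi> c1 = \<psi> c2"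
    have bk: "c = \<pi> ` (\<psi> c)" if cin: "c \<in> rcosets\<^bsub>Q\<^esub> K" for c
    proof -
      have "c \<subseteq> carrier Q" using subgroup.rcosets_carrier[OF Ksub QG cin] .
      show ?thesis
      proof
        show "c \<subseteq> \<pi> ` \<psi> c"
        proof
          fix q assume q: "q \<in> c"
          hence "q \<in> \<pi> ` carrier G" using \<open>c \<subseteq> carrier Q\<close> carQ by auto
          then obtain g where g: "q = \<pi> g" "g \<in> carrier G" by (rule imageE)
          hence "g \<in> \<psi> c" unfolding \<psi>_def using q by simp
          thus "q \<in> \<pi> ` \<psi> c" using g(1) by (rule rev_image_eqI)
        qed
        show "\<pi> ` \<psi> c \<subseteq> c" unfolding \<psi>_def by auto
      qed
    qed
    show "c1 = c2" using bk[OF c1] bk[OF c2] e by simp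
  qed
  have idx: "card (rcosets H) = card (rcosets\<^bsub>Q\<^esub> K)"
    using card_image[OF psi_inj] psi_img by simp
  define n where "n = card (rcosets\<^bsub>Q\<^esub> K)"
  have npos: "n > 0" unfolding n_def Q_def using n p by simp
  have finH: "finite (rcosets H)" by (rule card_ge_0_finite) (simp add: idx npos[unfolded n_def])
  have finK: "finite (rcosets\<^bsub>Q\<^esub> K)" by (rule card_ge_0_finite) (simp add: npos[unfolded n_def])
  define rep where "rep c = (SOME t. t \<in> c)" for c :: "'a set"
  define T where "T = rep ` (rcosets H)"
  have Tn: "card T \<le> n" unfolding T_def n_def idx[symmetric] by (rule card_image_le[OF finH])
  have Tfin: "finite T" unfolding T_def using finH by simp
  have transv: "\<exists>h\<in>H. \<exists>t\<in>T. g = h \<otimes> t" if g: "g \<in> carrier G" for g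
  proof -
    have gH: "g \<in> H #> g" using rcos_self[OF g Hsub] .
    define t where "t = rep (H #> g)"
    have tin: "t \<in> H #> g" unfolding t_def rep_def using gH by (rule someI)
    have tT: "t \<in> T" unfolding T_def t_def using rcosetsI[OF Hc g] by simp
    have "H #> g = H #> t" using repr_independence[OF tin g Hsub] .
    moreover have tc: "t \<in> carrier G" using tin r_coset_subset_G[OF Hc g] by blast
    ultimately have "g \<in> H #> t" using gH by simp
    then obtain h where "h \<in> H" "g = h \<otimes> t" unfolding r_coset_def by blast
    thus ?thesis using tT by blast
  qed
  have Tc: "T \<subseteq> carrier G"
  proof
    fix t assume "t \<in> T"
    then obtain c where c: "c \<in> rcosets H" "t = rep c" unfolding T_def by (rule imageE) simp
    then obtain g where g: "g \<in> carrier G" "c = H #> g" unfolding RCOSETS_def by blast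
    have "g \<in> c" using rcos_self[OF g(1) Hsub] g(2) by simp
    hence "t \<in> c" unfolding c(2) rep_def by (rule someI)
    thus "t \<in> carrier G" using g r_coset_subset_G[OF Hc g(1)] by blast
  qed
  define A where "A = G\<lparr>carrier := H\<rparr>"
  define B where "B = Q\<lparr>carrier := K\<rparr>"
  have AG: "group A" unfolding A_def by (rule subgroup_imp_group[OF Hsub])
  have BG: "group B" unfolding B_def by (rule group.subgroup_imp_group[OF QG Ksub])
  have ghAB: "group_hom A B \<pi>"
  proof -
    have "\<pi> \<in> hom A B"
    proof (rule homI)
      fix a assume "a \<in> carrier A" thus "\<pi> a \<in> carrier B" unfolding A_def B_def H_def by simp
    next
      fix a b assume "a \<in> carrier A" "b \<in> carrier A"
      hence "a \<in> carrier G" "b \<in> carrier G" unfolding A_def using Hc by auto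
      thus "\<pi> (a \<otimes>\<^bsub>A\<^esub> b) = \<pi> a \<otimes>\<^bsub>B\<^esub> \<pi> b"
        unfolding A_def B_def using group_hom.hom_mult[OF ghQ] by simp
    qed
    thus ?thesis unfolding group_hom_def group_hom_axioms_def using AG BG by simp
  qed
  have surAB: "\<pi> ` carrier A = carrier B" unfolding A_def B_def using piH by simp
  obtain S where S: "finite S" "S \<subseteq> carrier G" "generate G S = carrier G"
    using fg unfolding fin_gen_def by blast
  have "generate Q (\<pi> ` S) = \<pi> ` generate G S" by (rule group_hom.generate_img[OF ghQ S(2)])
  hence genQ: "generate Q (\<pi> ` S) = carrier Q" using S(3) carQ by simp
  have piSc: "\<pi> ` S \<subseteq> carrier Q" using S(2) carQ by blast
  obtain Y where Y: "finite Y" "Y \<subseteq> K" "generate Q Y = K"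
    using group.schreier[OF QG finite_imageI[OF S(1)] piSc genQ Ksub finK] by blast
  have genB: "generate B Y = carrier B"
    unfolding B_def using group.generate_consistent[OF QG Y(2) Ksub] Y(3) by simp
  obtain X1' where X1': "finite X1'" "X1' \<subseteq> carrier B" "card X1' \<le> d_p p B"
     "\<And>V. subgroup V B \<Longrightarrow> X1' \<subseteq> V \<Longrightarrow> frattini_p B p \<subseteq> V \<Longrightarrow> V = carrier B"
    using DP_ex[OF BG Y(1) _ genB, of p] Y(2) unfolding B_def by auto
  define lift where "lift k = (SOME h. h \<in> H \<and> \<pi> h = k)" for k
  have lift: "lift k \<in> H \<and> \<pi> (lift k) = k" if "k \<in> K" for k
  proof -
    have "\<exists>h. h \<in> H \<and> \<pi> h = k" using that piH by blast
    thus ?thesis unfolding lift_def by (rule someI_ex)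
  qed
  have X1'K: "X1' \<subseteq> K" using X1'(2) unfolding B_def by simp
  define X1 where "X1 = lift ` X1'"
  have X1H: "X1 \<subseteq> H" unfolding X1_def using lift X1'K by blast
  have piX1: "\<pi> ` X1 = X1'" unfolding X1_def image_image using lift X1'K
    by (force simp: image_iff)
  have cX1: "card X1 \<le> card X1'" unfolding X1_def by (rule card_image_le[OF X1'(1)])
  define X2 where "X2 = (\<lambda>t. t \<otimes> x \<otimes> inv t) ` T"
  have cX2: "card X2 \<le> n" unfolding X2_def using card_image_le[OF Tfin] Tn le_trans by blast
  have X2N: "X2 \<subseteq> N"
  proof
    fix y assume "y \<in> X2"
    then obtain t where t: "y = t \<otimes> x \<otimes> inv t" "t \<in> T" unfolding X2_def by (rule imageE)
    have "t \<in> carrier G" using t(2) Tc by blast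
    hence "y \<in> {g \<otimes> x \<otimes> inv g |g. g \<in> carrier G}" using t(1) by blast
    thus "y \<in> N" unfolding Ndef normal_closure_def by (rule generate.incl)
  qed
  define Xs where "Xs = X1 \<union> X2"
  have Xsfin: "finite Xs" unfolding Xs_def X1_def X2_def using X1'(1) Tfin by simp
  have XsA: "Xs \<subseteq> carrier A" unfolding Xs_def A_def using X1H X2N NH by auto
  have allW: "W = carrier A" if W: "subgroup W A" "Xs \<subseteq> W" "frattini_p A p \<subseteq> W" for W
  proof -
    have WH: "W \<subseteq> H" using subgroup.subset[OF W(1)] unfolding A_def by simp
    have WG: "subgroup W G" using incl_subgroup[OF Hsub W(1)[unfolded A_def]] .
    have nWA: "W \<lhd> A"
      using normal_of_derived[OF AG W(1)] frattini_subgroup(2)[OF AG, of p] W(3) by blast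
    have conj: "h \<otimes> w \<otimes> inv h \<in> W" if h: "h \<in> H" and w: "w \<in> W" for h w
    proof -
      have "h \<otimes>\<^bsub>A\<^esub> w \<otimes>\<^bsub>A\<^esub> inv\<^bsub>A\<^esub> h \<in> W"
        using normal.inv_op_closed2[OF nWA _ w] h unfolding A_def by simp
      thus ?thesis unfolding A_def using m_inv_consistent[OF Hsub h] by simp
    qed
    have NW: "N \<subseteq> W"
    proof -
      have "{g \<otimes> x \<otimes> inv g |g. g \<in> carrier G} \<subseteq> W"
      proof
        fix y assume "y \<in> {g \<otimes> x \<otimes> inv g |g. g \<in> carrier G}"
        then obtain g where g: "g \<in> carrier G" "y = g \<otimes> x \<otimes> inv g" by blast
        obtain h t where ht: "h \<in> H" "t \<in> T" "g = h \<otimes> t" using transv[OF g(1)] by blast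
        have hc: "h \<in> carrier G" and tc: "t \<in> carrier G" using ht Hc Tc by auto
        have "y = h \<otimes> (t \<otimes> x \<otimes> inv t) \<otimes> inv h"
          using g(2) ht(3) hc tc x by (simp add: m_assoc inv_mult_group)
        moreover have "t \<otimes> x \<otimes> inv t \<in> W" using W(2) ht(2) unfolding Xs_def X2_def by blast
        ultimately show "y \<in> W" using conj[OF ht(1)] by simp
      qed
      thus ?thesis unfolding Ndef normal_closure_def by (rule generate_subgroup_incl[OF _ WG])
    qed
    have piW: "\<pi> ` W = carrier B"
    proof (rule X1'(4))
      show "subgroup (\<pi> ` W) B" by (rule group_hom.subgroup_img_is_subgroup[OF ghAB W(1)])
      show "X1' \<subseteq> \<pi> ` W" using piX1 W(2) unfolding Xs_def by blast
      have "frattini_p B p \<subseteq> \<pi> ` frattini_p A p" by (rule frattini_img[OF ghAB surAB])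
      thus "frattini_p B p \<subseteq> \<pi> ` W" using W(3) by blast
    qed
    show ?thesis
    proof
      show "W \<subseteq> carrier A" using WH unfolding A_def by simp
      show "carrier A \<subseteq> W"
      proof
        fix h assume "h \<in> carrier A"
        hence h: "h \<in> H" unfolding A_def by simp
        hence hc: "h \<in> carrier G" using Hc by blast
        have "\<pi> h \<in> K" using h unfolding H_def by simp
        hence "\<pi> h \<in> \<pi> ` W" using piW unfolding B_def by simp
        then obtain w where w: "\<pi> h = \<pi> w" "w \<in> W" by (metis imageE)
        have "h \<in> N #> w" using repr_independenceD[OF Nsub hc] w(1) unfolding \<pi>_def by simp
        then obtain m where m: "m \<in> N" "h = m \<otimes> w" unfolding r_coset_def by blast
        thus "h \<in> W" using NW w(2) subgroup.m_closed[OF WG] by blast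
      qed
    qed
  qed
  have "d_p p A \<le> card Xs" by (rule DP_le[OF AG Xsfin XsA allW])
  also have "\<dots> \<le> card X1 + card X2" unfolding Xs_def by (rule card_Un_le)
  also have "\<dots> \<le> d_p p B + n" using cX1 X1'(3) cX2 by simp
  finally have "d_p p A \<le> d_p p B + n" .
  thus ?thesis using nH idx unfolding A_def B_def n_def Q_def by blast
qed

lemma (in group) whole_normal: "carrier G \<lhd> G"
  by (subst normal_inv_iff) (simp add: subgroup_self)

lemma (in group) whole_rcosets: "rcosets (carrier G) = {carrier G}"
proof -
  have "rcosets (carrier G) = (\<lambda>a. carrier G #> a) ` carrier G"
    unfolding RCOSETS_def by (simp add: UNION_singleton_eq_range)
  also have "\<dots> = (\<lambda>a. carrier G) ` carrier G"
    using coset_join2[OF _ subgroup_self] by (intro image_cong) auto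
  also have "\<dots> = {carrier G}" using one_closed by blast
  finally show ?thesis .
qed

theorem corollary3p3:
  fixes G :: "('a, 'b) monoid_scheme" and p :: nat and x :: 'a
  assumes "group G" and "fin_gen G" and "Factorial_Ring.prime p" and "x \<in> carrier G"
  shows "RG_p p (G Mod normal_closure G x) \<ge> RG_p p G - 1"
proof -
  define N where "N = normal_closure G x"
  have p0: "p > 0" using assms(3) prime_gt_0_nat by blast
  have nN: "N \<lhd> G" unfolding N_def by (rule group.normal_closure_normal[OF assms(1,4)])
  have QG: "group (G Mod N)" by (rule normal.factorgroup_is_group[OF nN])
  define VG where "VG = {(real (d_p p (G\<lparr>carrier := H\<rparr>)) - 1) / real (card (rcosets\<^bsub>G\<^esub> H)) | H.
                    H \<lhd> G \<and> (\<exists>k. card (rcosets\<^bsub>G\<^esub> H) = p ^ k)}"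
  define VQ where "VQ = {(real (d_p p ((G Mod N)\<lparr>carrier := K\<rparr>)) - 1) / real (card (rcosets\<^bsub>G Mod N\<^esub> K)) | K.
                    K \<lhd> (G Mod N) \<and> (\<exists>k. card (rcosets\<^bsub>G Mod N\<^esub> K) = p ^ k)}"
  have lowb: "(real d - 1) / real c \<ge> -1" if "c \<ge> 1" for d c :: nat
  proof -
    have "real c \<ge> 1" using that by simp
    hence "- real c \<le> real d - 1" by simp
    thus ?thesis using \<open>real c \<ge> 1\<close> by (simp add: divide_simps)
  qed
  have bddG: "bdd_below VG"
    unfolding bdd_below_def
  proof (intro exI ballI)
    fix v assume "v \<in> VG"
    then obtain H k where v: "v = (real (d_p p (G\<lparr>carrier := H\<rparr>)) - 1) / real (card (rcosets\<^bsub>G\<^esub> H))"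
       "card (rcosets\<^bsub>G\<^esub> H) = p ^ k" unfolding VG_def by blast
    have "card (rcosets\<^bsub>G\<^esub> H) \<ge> 1" using v(2) p0 by simp
    thus "-1 \<le> v" unfolding v(1) by (rule lowb)
  qed
  have neQ: "VQ \<noteq> {}"
  proof -
    have "card (rcosets\<^bsub>G Mod N\<^esub> (carrier (G Mod N))) = p ^ 0"
      using group.whole_rcosets[OF QG] by simp
    hence "(real (d_p p ((G Mod N)\<lparr>carrier := carrier (G Mod N)\<rparr>)) - 1) / real (card (rcosets\<^bsub>G Mod N\<^esub> (carrier (G Mod N)))) \<in> VQ"
      unfolding VQ_def using group.whole_normal[OF QG] by blast
    thus ?thesis by blast
  qed
  have "Inf VG - 1 \<le> Inf VQ"
  proof (rule cInf_greatest[OF neQ])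
    fix v assume "v \<in> VQ"
    then obtain K k where v: "v = (real (d_p p ((G Mod N)\<lparr>carrier := K\<rparr>)) - 1) / real (card (rcosets\<^bsub>G Mod N\<^esub> K))"
       "K \<lhd> (G Mod N)" "card (rcosets\<^bsub>G Mod N\<^esub> K) = p ^ k" unfolding VQ_def by blast
    obtain H where H: "H \<lhd> G" "card (rcosets\<^bsub>G\<^esub> H) = card (rcosets\<^bsub>G Mod N\<^esub> K)"
      "d_p p (G\<lparr>carrier := H\<rparr>) \<le> d_p p ((G Mod N)\<lparr>carrier := K\<rparr>) + card (rcosets\<^bsub>G Mod N\<^esub> K)"
      using group.key[OF assms(1,2,4) N_def v(2) v(3) p0] by blast
    define n where "n = card (rcosets\<^bsub>G Mod N\<^esub> K)"
    define dA where "dA = d_p p (G\<lparr>carrier := H\<rparr>)"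
    define dB where "dB = d_p p ((G Mod N)\<lparr>carrier := K\<rparr>)"
    have n1: "real n > 0" unfolding n_def using v(3) p0 by simp
    have dle: "real dA \<le> real dB + real n" using H(3) unfolding dA_def dB_def n_def by linarith
    have "(real dA - 1) / real n \<in> VG"
      unfolding VG_def dA_def n_def using H(1) H(2) v(3) by (metis (mono_tags, lifting) mem_Collect_eq)
    hence "Inf VG \<le> (real dA - 1) / real n" by (rule cInf_lower[OF _ bddG])
    moreover have "(real dA - 1) / real n - 1 \<le> (real dB - 1) / real n"
    proof -
      have "(real dA - 1) / real n - 1 = (real dA - 1 - real n) / real n" using n1 by (simp add: field_simps)
      also have "\<dots> \<le> (real dB - 1) / real n" using dle n1 by (intro divide_right_mono) auto
      finally show ?thesis .
    qed
    ultimately show "Inf VG - 1 \<le> v" unfolding v(1) dB_def[symmetric] n_def[symmetric] by linarith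
  qed
  thus ?thesis unfolding RG_p_def VG_def VQ_def N_def by simp
qed

end
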